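(* In the basic contact-tracing model (described in the context), for every $T\in\mathbb{N}$, every probability distribution $D$ on $\{0,1,2,\dots\}$, every $p_T\in(0,1]$ and every $\beta>0$, the policy that at every step queries a node of smallest recency present in the frontier is optimal.
   Context: Basic model. Fix $T\in\mathbb{N}$, a probability distribution $D$ on $\{0,1,2,\dots\}$, a constant $p_T\in(0,1]$ and a discount parameter $\beta>0$. Every node (individual) has a recency $h\in\{0,1,\dots,T\}$. Each node (whether an index case or a child of an infected node) is infected independently with probability $p_T$. If a node of recency $h$ is infected, then for each $j\in\{0,\dots,h-1\}$ it has $Z_j\sim D$ children of recency $j$, with all these counts independent across $j$ and across nodes and independent of the infection statuses; an uninfected node has no children that can be accessed. Contact tracing: at step $t=0$ the frontier is a given finite multiset of index cases with known recencies. At each step $t=0,1,2,\dots$ while the frontier is nonempty, the tracer selects one node of the frontier and queries it, removing it from the frontier. The query reveals the node's infection status; if the node is infected and has recency $h$, benefit $e^{-\beta(h+t)}$ is collected and its children (with their recencies) are added to the frontier; if it is uninfected, benefit $0$ is collected and nothing is added. Nodes of the same recency are indistinguishable before they are queried, so a policy is a (possibly history-dependent) rule choosing at each step which recency present in the frontier to query. A policy is optimal if for every initial frontier it maximizes the expected total collected benefit $\mathbb{E}\big[\sum_{t\ge 0}(\text{benefit collected at step } t)\big]$ over all policies. *)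

theory Defs
  imports "HOL-Probability.Probability"
begin

text \<open>Nodes are represented by their recency (a natural number).
  The frontier is a multiset of recencies.  The observation obtained when querying a node is
  None (uninfected) or Some zs (infected), where zs has length h (the recency of the queried
  node) and zs ! j is the number Z_j of children of recency j.\<close>

type_synonym ct_obs = "nat list option"

text \<open>History: list of (queried recency, observation), most recent query first.\<close>
type_synonym ct_hist = "(nat \<times> ct_obs) list"

type_synonym ct_policy = "nat multiset \<Rightarrow> ct_hist \<Rightarrow> nat"

definition ct_kids :: "nat list \<Rightarrow> nat multiset" where
  "ct_kids zs = (\<Sum>j<length zs. replicate_mset (zs ! j) j)"

fun ct_children_pmf :: "nat pmf \<Rightarrow> nat \<Rightarrow> nat list pmf" where
  "ct_children_pmf D 0 = return_pmf []"
| "ct_children_pmf D (Suc h) =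
     bind_pmf (ct_children_pmf D h) (\<lambda>zs. map_pmf (\<lambda>z. zs @ [z]) D)"

definition ct_outcome_pmf :: "nat pmf \<Rightarrow> real \<Rightarrow> nat \<Rightarrow> ct_obs pmf" where
  "ct_outcome_pmf D p h =
     bind_pmf (bernoulli_pmf p)
       (\<lambda>inf. if inf then map_pmf Some (ct_children_pmf D h) else return_pmf None)"

fun ct_frontier :: "nat multiset \<Rightarrow> ct_hist \<Rightarrow> nat multiset" where
  "ct_frontier F0 [] = F0"
| "ct_frontier F0 ((h, ob) # hs) =
     ct_frontier F0 hs - {#h#} + (case ob of None \<Rightarrow> {#} | Some zs \<Rightarrow> ct_kids zs)"

definition ct_benefit :: "real \<Rightarrow> nat \<Rightarrow> nat \<Rightarrow> ct_obs \<Rightarrow> ennreal" where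
  "ct_benefit \<beta> t h ob =
     (case ob of None \<Rightarrow> 0 | Some _ \<Rightarrow> ennreal (exp (- \<beta> * (real h + real t))))"

text \<open>Expected benefit collected during the next n steps, from history hs
  (the current step index is length hs).\<close>
fun ct_val :: "nat pmf \<Rightarrow> real \<Rightarrow> real \<Rightarrow> (ct_hist \<Rightarrow> nat) \<Rightarrow> nat multiset \<Rightarrow> nat \<Rightarrow> ct_hist \<Rightarrow> ennreal"
where
  "ct_val D p \<beta> \<pi> F0 0 hs = 0"
| "ct_val D p \<beta> \<pi> F0 (Suc n) hs =
     (if ct_frontier F0 hs = {#} then 0
      else (\<integral>\<^sup>+ ob. ct_benefit \<beta> (length hs) (\<pi> hs) ob + ct_val D p \<beta> \<pi> F0 n ((\<pi> hs, ob) # hs)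
              \<partial>measure_pmf (ct_outcome_pmf D p (\<pi> hs))))"

definition ct_expected_benefit ::
  "nat pmf \<Rightarrow> real \<Rightarrow> real \<Rightarrow> (ct_hist \<Rightarrow> nat) \<Rightarrow> nat multiset \<Rightarrow> ennreal" where
  "ct_expected_benefit D p \<beta> \<sigma> F0 = (SUP n. ct_val D p \<beta> \<sigma> F0 n [])"

definition ct_admissible :: "nat multiset \<Rightarrow> (ct_hist \<Rightarrow> nat) \<Rightarrow> bool" where
  "ct_admissible F0 \<sigma> \<longleftrightarrow>
     (\<forall>hs. ct_frontier F0 hs \<noteq> {#} \<longrightarrow> \<sigma> hs \<in># ct_frontier F0 hs)"

definition ct_optimal :: "nat \<Rightarrow> nat pmf \<Rightarrow> real \<Rightarrow> real \<Rightarrow> ct_policy \<Rightarrow> bool" where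
  "ct_optimal T D p \<beta> \<pi> \<longleftrightarrow>
     (\<forall>F0. (\<forall>h\<in>#F0. h \<le> T) \<longrightarrow>
        ct_admissible F0 (\<pi> F0) \<and>
        (\<forall>\<sigma>. ct_admissible F0 \<sigma> \<longrightarrow>
           ct_expected_benefit D p \<beta> \<sigma> F0 \<le> ct_expected_benefit D p \<beta> (\<pi> F0) F0))"

definition ct_greedy :: ct_policy where
  "ct_greedy F0 hs = Min (set_mset (ct_frontier F0 hs))"

end

theory Submission imports Defs begin

lemma pmf_integral_cong:
  assumes "\<And>x. x \<in> set_pmf M \<Longrightarrow> f x = g x"
  shows "(\<integral>\<^sup>+x. f x \<partial>measure_pmf M) = (\<integral>\<^sup>+x. g x \<partial>measure_pmf M)"
  by (rule nn_integral_cong_AE) (auto simp: AE_measure_pmf_iff assms)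

lemma pmf_integral_mono:
  assumes "\<And>x. x \<in> set_pmf M \<Longrightarrow> f x \<le> g x"
  shows "(\<integral>\<^sup>+x. f x \<partial>measure_pmf M) \<le> (\<integral>\<^sup>+x. g x \<partial>measure_pmf M)"
  by (rule nn_integral_mono_AE) (auto simp: AE_measure_pmf_iff assms)

lemma children_len: "zs \<in> set_pmf (ct_children_pmf D h) \<Longrightarrow> length zs = h"
  by (induction h arbitrary: zs) auto

lemma children_take: "m \<le> h \<Longrightarrow> map_pmf (take m) (ct_children_pmf D h) = ct_children_pmf D m"
proof (induction h)
  case 0 then show ?case by simp
next
  case (Suc h)
  show ?case
  proof (cases "m = Suc h")
    case True
    then have "map_pmf (take m) (ct_children_pmf D (Suc h)) = map_pmf id (ct_children_pmf D (Suc h))"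
      by (intro pmf.map_cong refl) (auto dest: children_len)
    then show ?thesis using True by simp
  next
    case False
    then have mh: "m \<le> h" using Suc by simp
    have "map_pmf (take m) (ct_children_pmf D (Suc h)) = bind_pmf (ct_children_pmf D h) (\<lambda>zs. map_pmf (\<lambda>z. take m (zs @ [z])) D)"
      by (simp add: map_bind_pmf pmf.map_comp o_def)
    also have "\<dots> = bind_pmf (ct_children_pmf D h) (\<lambda>zs. return_pmf (take m zs))"
      using mh by (intro bind_pmf_cong refl) (auto dest: children_len)
    also have "\<dots> = map_pmf (take m) (ct_children_pmf D h)" by (simp add: map_pmf_def)
    also have "\<dots> = ct_children_pmf D m" using Suc.IH mh by simp
    finally show ?thesis .
  qed
qed

lemma outcome_take: "m \<le> h \<Longrightarrow> map_pmf (map_option (take m)) (ct_outcome_pmf D p h) = ct_outcome_pmf D p m"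
  unfolding ct_outcome_pmf_def map_bind_pmf
  by (intro bind_pmf_cong refl) (auto simp: pmf.map_comp o_def children_take[symmetric])

lemma outcome_cases: "ob \<in> set_pmf (ct_outcome_pmf D p h) \<Longrightarrow> ob = None \<or> (\<exists>zs. ob = Some zs \<and> length zs = h)"
  unfolding ct_outcome_pmf_def by (auto split: if_splits dest: children_len)

lemma count_kids: "count (ct_kids zs) x = (if x < length zs then zs ! x else 0)"
  unfolding ct_kids_def count_sum by (simp add: count_replicate_mset)

lemma kids_lt: "x \<in># ct_kids zs \<Longrightarrow> x < length zs"
  by (metis count_kids count_eq_zero_iff)

lemma kids_take: "m \<le> length zs \<Longrightarrow> filter_mset (\<lambda>x. x < m) (ct_kids zs) = ct_kids (take m zs)"
  by (auto simp: multiset_eq_iff count_kids)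

fun VL :: "(nat \<Rightarrow> ennreal) \<Rightarrow> (nat \<Rightarrow> ennreal) \<Rightarrow> nat list \<Rightarrow> ennreal" where
  "VL r l [] = 0"
| "VL r l (x # xs) = r x + l x * VL r l xs"

definition PhiG where "PhiG r l M = VL r l (sorted_list_of_multiset M)"
definition LLG :: "(nat \<Rightarrow> ennreal) \<Rightarrow> nat multiset \<Rightarrow> ennreal" where "LLG l M = prod_mset (image_mset l M)"

lemma VL_append: "VL r l (xs @ ys) = VL r l xs + prod_list (map l xs) * VL r l ys"
  by (induction xs) (auto simp: algebra_simps)

lemma VL_cong: "(\<And>x. x \<in> set xs \<Longrightarrow> r x = r' x \<and> l x = l' x) \<Longrightarrow> VL r l xs = VL r' l' xs"
  by (induction xs) auto

lemma sl_append:
  assumes "\<forall>x\<in>#A. \<forall>y\<in>#C. x \<le> y"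
  shows "sorted_list_of_multiset (A + C) = sorted_list_of_multiset A @ sorted_list_of_multiset (C::nat multiset)"
proof -
  let ?xs = "sorted_list_of_multiset A @ sorted_list_of_multiset C"
  have "sorted ?xs" using assms by (auto simp: sorted_append)
  moreover have "mset ?xs = A + C" by simp
  ultimately show ?thesis by (metis sorted_list_of_multiset_mset sorted_sort_id)
qed

lemma LLG_list: "prod_list (map l (sorted_list_of_multiset A)) = LLG l A"
  unfolding LLG_def by (metis mset_map mset_sorted_list_of_multiset prod_mset_prod_list)

lemma Phi_append:
  assumes "\<forall>x\<in>#A. \<forall>y\<in>#C. x \<le> y"
  shows "PhiG r l (A + C) = PhiG r l A + LLG l A * PhiG r l C"
  unfolding PhiG_def sl_append[OF assms] VL_append LLG_list ..

lemma Phi_add_min: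
  assumes "\<forall>y\<in>#C. x \<le> y"
  shows "PhiG r l (add_mset x C) = r x + l x * PhiG r l C"
proof -
  have "PhiG r l ({#x#} + C) = PhiG r l {#x#} + LLG l {#x#} * PhiG r l C"
    using assms by (intro Phi_append) auto
  then show ?thesis by (simp add: PhiG_def LLG_def)
qed

lemma Phi_empty[simp]: "PhiG r l {#} = 0" by (simp add: PhiG_def)

lemma Phi_cong: "(\<And>x. x \<in># M \<Longrightarrow> r x = r' x \<and> l x = l' x) \<Longrightarrow> PhiG r l M = PhiG r' l' M"
  unfolding PhiG_def by (rule VL_cong) auto

lemma LLG_cong: "(\<And>x. x \<in># M \<Longrightarrow> l x = l' x) \<Longrightarrow> LLG l M = LLG l' M"
  unfolding LLG_def by (metis image_mset_cong)

lemma ennreal_swap: assumes "x \<le> r" "l \<le> (1::ennreal)" shows "x + r * l \<le> r + l * x"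
proof -
  obtain d where d: "r = x + d" using assms(1) le_iff_add by blast
  have "l * d \<le> d" using assms(2) by (metis mult_right_mono mult_1 zero_le)
  then show ?thesis unfolding d by (simp add: algebra_simps add_left_mono add.left_commute)
qed


locale ctm =
  fixes D :: "nat pmf" and p :: real and \<beta> :: real
  assumes beta_pos: "0 < \<beta>"
begin

definition g :: real where "g = exp (- \<beta>)"

lemma g_pos: "0 < g" and g_lt1: "g < 1"
  using beta_pos by (auto simp: g_def)

definition outc where "outc h = ct_outcome_pmf D p h"
definition Bn :: "nat \<Rightarrow> ct_obs \<Rightarrow> ennreal" where
  "Bn h ob = (case ob of None \<Rightarrow> 0 | Some _ \<Rightarrow> ennreal (g ^ h))"
definition kidsof :: "ct_obs \<Rightarrow> nat multiset" where
  "kidsof ob = (case ob of None \<Rightarrow> {#} | Some zs \<Rightarrow> ct_kids zs)"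

lemma kidsof_lt: "ob \<in> set_pmf (outc h) \<Longrightarrow> x \<in># kidsof ob \<Longrightarrow> x < h"
  using outcome_cases[of ob D p h] kids_lt unfolding outc_def kidsof_def by fastforce

definition newjob where
  "newjob r l h = ((\<integral>\<^sup>+ob. Bn h ob + ennreal g * PhiG r l (kidsof ob) \<partial>outc h),
                   (\<integral>\<^sup>+ob. ennreal g * LLG l (kidsof ob) \<partial>outc h))"

primrec jt :: "nat \<Rightarrow> nat \<Rightarrow> ennreal \<times> ennreal" where
  "jt 0 = (\<lambda>_. (0, 1))"
| "jt (Suc n) = (jt n)(n := newjob (\<lambda>j. fst (jt n j)) (\<lambda>j. snd (jt n j)) n)"

definition rr where "rr h = fst (jt (Suc h) h)"
definition ll where "ll h = snd (jt (Suc h) h)"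

lemma jt_stable: "h < n \<Longrightarrow> jt n h = jt (Suc h) h"
  by (induction n) (auto simp: less_Suc_eq)

lemma newjob_cong:
  assumes "\<And>j. j < h \<Longrightarrow> r j = r' j \<and> l j = l' j"
  shows "newjob r l h = newjob r' l' h"
proof -
  have 1: "PhiG r l (kidsof ob) = PhiG r' l' (kidsof ob)" if "ob \<in> set_pmf (outc h)" for ob
  proof (rule Phi_cong)
    fix x assume "x \<in># kidsof ob"
    then show "r x = r' x \<and> l x = l' x" using assms kidsof_lt[OF that] by simp
  qed
  have 2: "LLG l (kidsof ob) = LLG l' (kidsof ob)" if "ob \<in> set_pmf (outc h)" for ob
  proof (rule LLG_cong)
    fix x assume "x \<in># kidsof ob"
    then show "l x = l' x" using assms kidsof_lt[OF that] by simp
  qed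
  have "(\<integral>\<^sup>+ob. Bn h ob + ennreal g * PhiG r l (kidsof ob) \<partial>outc h) =
        (\<integral>\<^sup>+ob. Bn h ob + ennreal g * PhiG r' l' (kidsof ob) \<partial>outc h)"
    by (rule pmf_integral_cong) (simp only: 1)
  moreover have "(\<integral>\<^sup>+ob. ennreal g * LLG l (kidsof ob) \<partial>outc h) =
        (\<integral>\<^sup>+ob. ennreal g * LLG l' (kidsof ob) \<partial>outc h)"
    by (rule pmf_integral_cong) (simp only: 2)
  ultimately show ?thesis unfolding newjob_def by simp
qed

lemma jt_newjob: "jt (Suc h) h = newjob rr ll h"
proof -
  have "jt (Suc h) h = newjob (\<lambda>j. fst (jt h j)) (\<lambda>j. snd (jt h j)) h" by simp
  also have "\<dots> = newjob rr ll h"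
    by (rule newjob_cong) (simp add: rr_def ll_def jt_stable)
  finally show ?thesis .
qed

abbreviation Phi where "Phi \<equiv> PhiG rr ll"
abbreviation LL where "LL \<equiv> LLG ll"

lemma rr_eq: "rr h = (\<integral>\<^sup>+ob. Bn h ob + ennreal g * Phi (kidsof ob) \<partial>outc h)"
  using jt_newjob[of h] by (simp add: rr_def newjob_def)

lemma ll_eq: "ll h = (\<integral>\<^sup>+ob. ennreal g * LL (kidsof ob) \<partial>outc h)"
  using jt_newjob[of h] by (simp add: ll_def newjob_def)

definition Cc :: ennreal where "Cc = ennreal (1 / (1 - g))"

lemma Cc_eq: "1 + ennreal g * Cc = Cc"
proof -
  have e: "1 + g * (1 / (1 - g)) = 1 / (1 - g)" using g_lt1 by (simp add: field_simps)
  have "ennreal g * Cc = ennreal (g * (1 / (1 - g)))" unfolding Cc_def using g_pos g_lt1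
    by (subst ennreal_mult[symmetric]) auto
  moreover have "0 \<le> g * (1 / (1 - g))" using g_pos g_lt1 by simp
  ultimately have "1 + ennreal g * Cc = ennreal (1 + g * (1 / (1 - g)))"
    by (simp add: ennreal_plus)
  then show ?thesis unfolding e Cc_def .
qed

lemma Bn_le1: "Bn h ob \<le> 1"
  using g_pos g_lt1 by (auto simp: Bn_def split: option.splits intro!: power_le_one)

lemma VL_bound:
  "(\<And>x. x \<in> set xs \<Longrightarrow> rr x + Cc * ll x \<le> Cc) \<Longrightarrow> VL rr ll xs + Cc * prod_list (map ll xs) \<le> Cc"
proof (induction xs)
  case Nil then show ?case by simp
next
  case (Cons x xs)
  have "VL rr ll (x # xs) + Cc * prod_list (map ll (x # xs)) = rr x + ll x * (VL rr ll xs + Cc * prod_list (map ll xs))"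
    by (simp add: algebra_simps)
  also have "\<dots> \<le> rr x + ll x * Cc"
    using Cons by (intro add_left_mono mult_left_mono) auto
  also have "\<dots> \<le> Cc" using Cons.prems[of x] by (simp add: mult.commute)
  finally show ?case .
qed

lemma job_bound: "rr h + Cc * ll h \<le> Cc"
proof (induction h rule: less_induct)
  case (less h)
  have K: "Phi (kidsof ob) + Cc * LL (kidsof ob) \<le> Cc" if "ob \<in> set_pmf (outc h)" for ob
  proof -
    have "VL rr ll (sorted_list_of_multiset (kidsof ob)) + Cc * prod_list (map ll (sorted_list_of_multiset (kidsof ob))) \<le> Cc"
    proof (rule VL_bound)
      fix x assume "x \<in> set (sorted_list_of_multiset (kidsof ob))"
      then have "x < h" using kidsof_lt[OF that] by simp
      then show "rr x + Cc * ll x \<le> Cc" by (rule less)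
    qed
    then show ?thesis unfolding PhiG_def LLG_list .
  qed
  have "Cc * ll h = (\<integral>\<^sup>+ob. Cc * (ennreal g * LL (kidsof ob)) \<partial>outc h)"
    unfolding ll_eq[of h] by (rule nn_integral_cmult[symmetric]) simp
  then have "rr h + Cc * ll h = (\<integral>\<^sup>+ob. (Bn h ob + ennreal g * Phi (kidsof ob)) + Cc * (ennreal g * LL (kidsof ob)) \<partial>outc h)"
    unfolding rr_eq[of h] by (simp add: nn_integral_add)
  also have "\<dots> = (\<integral>\<^sup>+ob. Bn h ob + ennreal g * (Phi (kidsof ob) + Cc * LL (kidsof ob)) \<partial>outc h)"
    by (rule nn_integral_cong) (simp add: distrib_left mult.left_commute add.assoc)
  also have "\<dots> \<le> (\<integral>\<^sup>+ob. 1 + ennreal g * Cc \<partial>outc h)"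
  proof (rule pmf_integral_mono)
    fix ob assume "ob \<in> set_pmf (outc h)"
    then show "Bn h ob + ennreal g * (Phi (kidsof ob) + Cc * LL (kidsof ob)) \<le> 1 + ennreal g * Cc"
      by (intro add_mono Bn_le1 mult_left_mono K) auto
  qed
  also have "\<dots> = Cc" using Cc_eq by simp
  finally show ?case .
qed

lemma Cc_pos: "Cc \<noteq> 0" and Cc_fin: "Cc \<noteq> top"
  using g_lt1 by (auto simp: Cc_def)

lemma ll_le1: "ll h \<le> 1"
proof -
  have "Cc * ll h \<le> rr h + Cc * ll h" by simp
  also have "\<dots> \<le> Cc * 1" using job_bound[of h] by simp
  finally show ?thesis by (simp only: ennreal_mult_le_mult_iff[OF Cc_pos Cc_fin])
qed

lemma Phi_bound: "Phi M \<le> Cc"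
proof -
  have "VL rr ll (sorted_list_of_multiset M) + Cc * prod_list (map ll (sorted_list_of_multiset M)) \<le> Cc"
    by (rule VL_bound) (rule job_bound)
  then have "Phi M + Cc * LL M \<le> Cc" unfolding PhiG_def LLG_list .
  moreover have "Phi M \<le> Phi M + Cc * LL M" by simp
  ultimately show ?thesis by (rule order_trans[rotated])
qed

definition Q where
  "Q F b = (\<integral>\<^sup>+ob. Bn b ob + ennreal g * Phi (F - {#b#} + kidsof ob) \<partial>outc b)"

lemma Phi_min:
  assumes "F \<noteq> {#}"
  shows "Phi F = Q F (Min (set_mset F))"
proof -
  define m where "m = Min (set_mset F)"
  define G where "G = F - {#m#}"
  have mF: "m \<in># F" using assms unfolding m_def by auto
  have geF: "\<forall>y\<in>#F. m \<le> y" unfolding m_def by auto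
  have geG: "\<forall>y\<in>#G. m \<le> y" using geF unfolding G_def by (auto dest: in_diffD)
  have FG: "F = add_mset m G" using mF unfolding G_def by simp
  have PF: "Phi F = rr m + ll m * Phi G" unfolding FG by (rule Phi_add_min[OF geG])
  have "ll m * Phi G = (\<integral>\<^sup>+ob. ennreal g * LL (kidsof ob) * Phi G \<partial>outc m)"
    unfolding ll_eq[of m] by (rule nn_integral_multc[symmetric]) simp
  then have "Phi F = (\<integral>\<^sup>+ob. (Bn m ob + ennreal g * Phi (kidsof ob)) + ennreal g * LL (kidsof ob) * Phi G \<partial>outc m)"
    unfolding PF rr_eq[of m] by (simp add: nn_integral_add)
  also have "\<dots> = Q F m" unfolding Q_def
  proof (rule pmf_integral_cong)
    fix ob assume ob: "ob \<in> set_pmf (outc m)"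
    have "\<forall>x\<in>#kidsof ob. \<forall>y\<in>#G. x \<le> y"
      using kidsof_lt[OF ob] geG by (meson less_imp_le order_trans)
    then have e0: "Phi (kidsof ob + G) = Phi (kidsof ob) + LL (kidsof ob) * Phi G" by (rule Phi_append)
    have eq: "F - {#m#} + kidsof ob = kidsof ob + G" unfolding G_def by (simp add: add.commute)
    have e: "Phi (F - {#m#} + kidsof ob) = Phi (kidsof ob) + LL (kidsof ob) * Phi G"
      unfolding eq e0 ..
    show "(Bn m ob + ennreal g * Phi (kidsof ob)) + ennreal g * LL (kidsof ob) * Phi G =
      Bn m ob + ennreal g * Phi (F - {#m#} + kidsof ob)"
      unfolding e by (simp add: distrib_left mult.assoc add.assoc)
  qed
  finally show ?thesis unfolding m_def .
qed

lemma bellman: "b \<in># F \<Longrightarrow> Q F b \<le> Phi F"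
proof (induction "size F" arbitrary: F b rule: less_induct)
  case less
  define m where "m = Min (set_mset F)"
  have Fne: "F \<noteq> {#}" using less.prems by auto
  have mF: "m \<in># F" using Fne unfolding m_def by auto
  have geF: "\<forall>y\<in>#F. m \<le> y" unfolding m_def by auto
  show ?case
  proof (cases "b = m")
    case True then show ?thesis using Phi_min[OF Fne] unfolding m_def by simp
  next
    case False
    then have mb: "m < b" using geF less.prems by force
    define G where "G = F - {#m#}"
    have FG: "F = add_mset m G" using mF unfolding G_def by simp
    have bG: "b \<in># G" using less.prems False unfolding FG by simp
    have geG: "\<forall>y\<in>#G. m \<le> y" using geF unfolding FG by simp
    have sizeG: "size G < size F" unfolding FG by simp
    have IH: "Q G b \<le> Phi G" using less.hyps[OF sizeG bG] .
    have PhiF: "Phi F = rr m + ll m * Phi G" unfolding FG by (rule Phi_add_min[OF geG])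
    define f where "f = (map_option (take m) :: ct_obs \<Rightarrow> ct_obs)"
    define Kl where "Kl ob = filter_mset (\<lambda>x. x < m) (kidsof ob)" for ob
    define R where "R ob = G - {#b#} + filter_mset (\<lambda>x. \<not> x < m) (kidsof ob)" for ob
    have Kl_f: "Kl ob = kidsof (f ob)" if ob: "ob \<in> set_pmf (outc b)" for ob
    proof -
      have "ob = None \<or> (\<exists>zs. ob = Some zs \<and> length zs = b)"
        using outcome_cases[of ob D p b] ob unfolding outc_def by simp
      then show ?thesis
      proof
        assume "ob = None" then show ?thesis by (simp add: Kl_def f_def kidsof_def)
      next
        assume "\<exists>zs. ob = Some zs \<and> length zs = b"
        then obtain zs where "ob = Some zs" "length zs = b" by blast
        then show ?thesis using mb kids_take[of m zs] by (simp add: Kl_def f_def kidsof_def)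
      qed
    qed
    have Bn_f: "Bn b ob \<le> Bn m (f ob)" for ob
      using mb g_pos g_lt1 by (auto simp: Bn_def f_def split: option.splits intro!: power_decreasing)
    have Rge: "\<forall>y\<in>#R ob. m \<le> y" for ob
      using geG unfolding R_def by (auto dest: in_diffD)
    have dec: "Phi (H - {#b#} + kidsof ob) = Phi (Kl ob) + LL (Kl ob) * Phi (H' + R ob)"
      if "H - {#b#} = H' + (G - {#b#})" "\<forall>y\<in>#H'. m \<le> y" for H H' ob
    proof -
      have "kidsof ob = Kl ob + filter_mset (\<lambda>x. \<not> x < m) (kidsof ob)"
        unfolding Kl_def by (rule multiset_partition)
      then have "H - {#b#} + kidsof ob = Kl ob + (H' + R ob)"
        unfolding that(1) R_def by (simp add: add_ac)
      moreover have "\<forall>x\<in>#Kl ob. \<forall>y\<in>#H' + R ob. x \<le> y"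
        using that(2) Rge[of ob] unfolding Kl_def by fastforce
      ultimately show ?thesis using Phi_append by simp
    qed
    have dec1: "Phi (F - {#b#} + kidsof ob) = Phi (Kl ob) + LL (Kl ob) * (rr m + ll m * Phi (R ob))" for ob
    proof -
      have "F - {#b#} = {#m#} + (G - {#b#})" unfolding FG using False by simp
      then have "Phi (F - {#b#} + kidsof ob) = Phi (Kl ob) + LL (Kl ob) * Phi ({#m#} + R ob)"
        by (rule dec) simp
      also have "Phi ({#m#} + R ob) = rr m + ll m * Phi (R ob)"
        using Phi_add_min[OF Rge[of ob]] by simp
      finally show ?thesis .
    qed
    have dec2: "Phi (G - {#b#} + kidsof ob) = Phi (Kl ob) + LL (Kl ob) * Phi (R ob)" for ob
      using dec[of G "{#}" ob] by simp
    define x where "x = (\<integral>\<^sup>+ob. Bn b ob + ennreal g * Phi (Kl ob) \<partial>outc b)"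
    define z where "z = (\<integral>\<^sup>+ob. ll m * (ennreal g * LL (Kl ob) * Phi (R ob)) \<partial>outc b)"
    define z' where "z' = (\<integral>\<^sup>+ob. ennreal g * LL (Kl ob) * Phi (R ob) \<partial>outc b)"
    have zz: "z = ll m * z'" unfolding z_def z'_def by (rule nn_integral_cmult) simp
    have y: "(\<integral>\<^sup>+ob. ennreal g * LL (Kl ob) \<partial>outc b) = ll m"
    proof -
      have "(\<integral>\<^sup>+ob. ennreal g * LL (Kl ob) \<partial>outc b) = (\<integral>\<^sup>+ob. ennreal g * LL (kidsof (f ob)) \<partial>outc b)"
        by (rule pmf_integral_cong) (simp add: Kl_f)
      also have "\<dots> = (\<integral>\<^sup>+ob. ennreal g * LL (kidsof ob) \<partial>map_pmf f (outc b))" by simp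
      also have "map_pmf f (outc b) = outc m" unfolding f_def outc_def using mb by (simp add: outcome_take)
      finally show ?thesis using ll_eq[of m] by simp
    qed
    have xr: "x \<le> rr m"
    proof -
      have "x \<le> (\<integral>\<^sup>+ob. Bn m (f ob) + ennreal g * Phi (kidsof (f ob)) \<partial>outc b)"
        unfolding x_def by (rule pmf_integral_mono) (simp add: Kl_f Bn_f add_right_mono)
      also have "\<dots> = (\<integral>\<^sup>+ob. Bn m ob + ennreal g * Phi (kidsof ob) \<partial>map_pmf f (outc b))" by simp
      also have "map_pmf f (outc b) = outc m" unfolding f_def outc_def using mb by (simp add: outcome_take)
      finally show ?thesis using rr_eq[of m] by simp
    qed
    have QF: "Q F b = x + rr m * ll m + z"
    proof -
      have "Q F b = (\<integral>\<^sup>+ob. (Bn b ob + ennreal g * Phi (Kl ob)) + rr m * (ennreal g * LL (Kl ob))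
                  + ll m * (ennreal g * LL (Kl ob) * Phi (R ob)) \<partial>outc b)"
        unfolding Q_def dec1 by (rule nn_integral_cong) (simp add: algebra_simps)
      also have "\<dots> = x + rr m * (\<integral>\<^sup>+ob. ennreal g * LL (Kl ob) \<partial>outc b) + z"
        unfolding x_def z_def by (simp add: nn_integral_add nn_integral_cmult)
      finally show ?thesis unfolding y .
    qed
    have QG: "Q G b = x + z'"
    proof -
      have "Q G b = (\<integral>\<^sup>+ob. (Bn b ob + ennreal g * Phi (Kl ob)) + ennreal g * LL (Kl ob) * Phi (R ob) \<partial>outc b)"
        unfolding Q_def dec2 by (rule nn_integral_cong) (simp add: algebra_simps)
      also have "\<dots> = x + z'"
        unfolding x_def z'_def by (simp add: nn_integral_add)
      finally show ?thesis .
    qed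
    have "Q F b \<le> rr m + ll m * x + z"
      unfolding QF using ennreal_swap[OF xr ll_le1[of m]] by (simp add: add_right_mono)
    also have "\<dots> = rr m + ll m * Q G b" unfolding QG zz by (simp add: algebra_simps)
    also have "\<dots> \<le> rr m + ll m * Phi G" using IH by (intro add_left_mono mult_left_mono) auto
    finally show ?thesis unfolding PhiF .
  qed
qed

lemma benefit_eq: "ct_benefit \<beta> t h ob = ennreal (g ^ t) * Bn h ob"
proof (cases ob)
  case None then show ?thesis by (simp add: ct_benefit_def Bn_def)
next
  case (Some zs)
  have "exp (- \<beta> * (real h + real t)) = exp (real t * (- \<beta>)) * exp (real h * (- \<beta>))"
    by (simp add: algebra_simps exp_add[symmetric])
  also have "\<dots> = g ^ t * g ^ h" unfolding g_def by (simp only: exp_of_nat_mult)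
  finally show ?thesis using Some g_pos by (simp add: ct_benefit_def Bn_def ennreal_mult)
qed

lemma frontier_step: "ct_frontier F0 ((b, ob) # hs) = ct_frontier F0 hs - {#b#} + kidsof ob"
  by (simp add: kidsof_def)

lemma gpow_Suc: "ennreal (g ^ Suc t) = ennreal (g ^ t) * ennreal g"
  using g_pos by (simp add: ennreal_mult mult.commute)

lemma val_le:
  assumes adm: "ct_admissible F0 \<sigma>"
  shows "ct_val D p \<beta> \<sigma> F0 n hs \<le> ennreal (g ^ length hs) * Phi (ct_frontier F0 hs)"
proof (induction n arbitrary: hs)
  case 0 then show ?case by simp
next
  case (Suc n)
  let ?F = "ct_frontier F0 hs"
  let ?t = "length hs"
  show ?case
  proof (cases "?F = {#}")
    case True then show ?thesis by simp
  next
    case False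
    let ?b = "\<sigma> hs"
    have bF: "?b \<in># ?F" using adm False unfolding ct_admissible_def by blast
    have "ct_val D p \<beta> \<sigma> F0 (Suc n) hs =
      (\<integral>\<^sup>+ ob. ct_benefit \<beta> ?t ?b ob + ct_val D p \<beta> \<sigma> F0 n ((?b, ob) # hs) \<partial>outc ?b)"
      using False by (simp add: outc_def)
    also have "\<dots> \<le> (\<integral>\<^sup>+ ob. ennreal (g ^ ?t) * (Bn ?b ob + ennreal g * Phi (?F - {#?b#} + kidsof ob)) \<partial>outc ?b)"
    proof (rule pmf_integral_mono)
      fix ob
      have "ct_val D p \<beta> \<sigma> F0 n ((?b, ob) # hs) \<le> ennreal (g ^ Suc ?t) * Phi (?F - {#?b#} + kidsof ob)"
        using Suc.IH[of "(?b, ob) # hs"] unfolding frontier_step by simp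
      then show "ct_benefit \<beta> ?t ?b ob + ct_val D p \<beta> \<sigma> F0 n ((?b, ob) # hs) \<le>
           ennreal (g ^ ?t) * (Bn ?b ob + ennreal g * Phi (?F - {#?b#} + kidsof ob))"
        unfolding benefit_eq gpow_Suc by (simp add: distrib_left mult.assoc add_left_mono)
    qed
    also have "\<dots> = ennreal (g ^ ?t) * Q ?F ?b" unfolding Q_def by (rule nn_integral_cmult) simp
    also have "\<dots> \<le> ennreal (g ^ ?t) * Phi ?F" using bellman[OF bF] by (rule mult_left_mono) simp
    finally show ?thesis .
  qed
qed

lemma greedy_lb:
  "ennreal (g ^ length hs) * Phi (ct_frontier F0 hs)
     \<le> ct_val D p \<beta> (ct_greedy F0) F0 n hs + ennreal (g ^ (length hs + n)) * Cc"
proof (induction n arbitrary: hs)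
  case 0 then show ?case using Phi_bound by (simp add: mult_left_mono)
next
  case (Suc n)
  let ?F = "ct_frontier F0 hs"
  let ?t = "length hs"
  show ?case
  proof (cases "?F = {#}")
    case True then show ?thesis by simp
  next
    case False
    let ?b = "ct_greedy F0 hs"
    have bm: "?b = Min (set_mset ?F)" by (simp add: ct_greedy_def)
    have "ennreal (g ^ ?t) * Phi ?F = ennreal (g ^ ?t) * Q ?F ?b" using Phi_min[OF False] bm by simp
    also have "\<dots> = (\<integral>\<^sup>+ ob. ennreal (g ^ ?t) * (Bn ?b ob + ennreal g * Phi (?F - {#?b#} + kidsof ob)) \<partial>outc ?b)"
      unfolding Q_def by (rule nn_integral_cmult[symmetric]) simp
    also have "\<dots> \<le> (\<integral>\<^sup>+ ob. (ct_benefit \<beta> ?t ?b ob + ct_val D p \<beta> (ct_greedy F0) F0 n ((?b, ob) # hs))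
                   + ennreal (g ^ (?t + Suc n)) * Cc \<partial>outc ?b)"
    proof (rule pmf_integral_mono)
      fix ob
      have "ennreal (g ^ Suc ?t) * Phi (?F - {#?b#} + kidsof ob) \<le>
            ct_val D p \<beta> (ct_greedy F0) F0 n ((?b, ob) # hs) + ennreal (g ^ (?t + Suc n)) * Cc"
        using Suc.IH[of "(?b, ob) # hs"] unfolding frontier_step by simp
      then show "ennreal (g ^ ?t) * (Bn ?b ob + ennreal g * Phi (?F - {#?b#} + kidsof ob)) \<le>
           (ct_benefit \<beta> ?t ?b ob + ct_val D p \<beta> (ct_greedy F0) F0 n ((?b, ob) # hs))
                   + ennreal (g ^ (?t + Suc n)) * Cc"
        unfolding benefit_eq gpow_Suc by (simp add: distrib_left mult.assoc add.assoc add_left_mono)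
    qed
    also have "\<dots> = ct_val D p \<beta> (ct_greedy F0) F0 (Suc n) hs + ennreal (g ^ (?t + Suc n)) * Cc"
      using False by (simp add: nn_integral_add outc_def)
    finally show ?thesis .
  qed
qed

lemma lim_le:
  assumes "\<And>n. a \<le> E + ennreal (g ^ n) * Cc"
  shows "a \<le> E"
proof -
  have "(\<lambda>n. g ^ n * (1 / (1 - g))) \<longlonglongrightarrow> 0 * (1 / (1 - g))"
    by (intro tendsto_intros LIMSEQ_power_zero) (use g_pos g_lt1 in auto)
  then have "(\<lambda>n. ennreal (g ^ n * (1 / (1 - g)))) \<longlonglongrightarrow> ennreal 0"
    by (intro tendsto_ennrealI) simp
  moreover have "ennreal (g ^ n * (1 / (1 - g))) = ennreal (g ^ n) * Cc" for n
    unfolding Cc_def using g_pos g_lt1 by (subst ennreal_mult[symmetric]) auto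
  ultimately have "(\<lambda>n. ennreal (g ^ n) * Cc) \<longlonglongrightarrow> 0" by simp
  then have "(\<lambda>n. E + ennreal (g ^ n) * Cc) \<longlonglongrightarrow> E + 0"
    by (intro tendsto_add tendsto_const)
  then show ?thesis using assms by (intro LIMSEQ_le_const[where X="\<lambda>n. E + ennreal (g ^ n) * Cc"]) auto
qed

lemma main:
  assumes adm: "ct_admissible F0 \<sigma>"
  shows "ct_expected_benefit D p \<beta> \<sigma> F0 \<le> ct_expected_benefit D p \<beta> (ct_greedy F0) F0"
proof -
  have "ct_expected_benefit D p \<beta> \<sigma> F0 \<le> Phi F0"
    unfolding ct_expected_benefit_def
    using val_le[OF adm, of _ "[]"] by (intro SUP_least) simp
  also have "Phi F0 \<le> ct_expected_benefit D p \<beta> (ct_greedy F0) F0"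
  proof (rule lim_le)
    fix n
    have "Phi F0 \<le> ct_val D p \<beta> (ct_greedy F0) F0 n [] + ennreal (g ^ n) * Cc"
      using greedy_lb[of "[]" F0 n] by simp
    also have "\<dots> \<le> ct_expected_benefit D p \<beta> (ct_greedy F0) F0 + ennreal (g ^ n) * Cc"
      unfolding ct_expected_benefit_def by (intro add_right_mono SUP_upper) auto
    finally show "Phi F0 \<le> ct_expected_benefit D p \<beta> (ct_greedy F0) F0 + ennreal (g ^ n) * Cc" .
  qed
  finally show ?thesis .
qed

end

theorem theorem5p1:
  fixes T :: nat and D :: "nat pmf" and p\<^sub>T :: real and \<beta> :: real
  assumes "0 < p\<^sub>T" and "p\<^sub>T \<le> 1" and "0 < \<beta>"
  shows "ct_optimal T D p\<^sub>T \<beta> ct_greedy"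
proof -
  interpret ctm D p\<^sub>T \<beta> using assms(3) by unfold_locales
  have adm: "ct_admissible F0 (ct_greedy F0)" for F0
    unfolding ct_admissible_def ct_greedy_def by auto
  show ?thesis unfolding ct_optimal_def using adm main by blast
qed

end
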